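(* Let $\mathcal F$ be a proper filter on $\omega$ and consider the game $\mathfrak G(\mathcal F,\omega,\mathcal F)$. Then (1) player I has a winning strategy if and only if $\mathcal F$ is not Ramsey; (2) player II never has a winning strategy.
   Context: A filter on $\omega$ is a family $\mathcal F\subseteq\mathcal P(\omega)$ closed under finite intersections and supersets and containing all cofinite sets; it is proper if all its members are infinite. Game $\mathfrak G(\mathcal X,\omega,\mathcal Z)$: at each stage $k\in\omega$, player I chooses $X_k\in\mathcal X$ and player II responds with $n_k\in X_k$; II wins if $\{n_k:k\in\omega\}\in\mathcal Z$, otherwise I wins. A tree is a set $T$ of finite sequences of natural numbers containing the empty sequence and closed under initial segments; for $\mathcal X\subseteq\mathcal P(\omega)$ it is an $\mathcal X$-tree if for each $\bar s\in T$ there is $X_{\bar s}\in\mathcal X$ with $\bar s^\frown n\in T$ for all $n\in X_{\bar s}$. A branch is an infinite sequence all of whose finite initial segments lie in $T$; a branch is "in" a family if its set of values belongs to that family. $\mathcal F$ is Ramsey if every $\mathcal F$-tree has a branch in $\mathcal F$ (equivalently, $\mathcal F$ is both a Q-filter and a P-filter, where a Q-filter is one such that for every partition of $\omega$ into finite sets $s_k$ there is $X\in\mathcal F$ with $|X\cap s_k|\le 1$ for all $k$, and a P-filter is one such that every countable subfamily $\{X_n\}$ has some $X\in\mathcal F$ with $X\setminus X_n$ finite for all $n$). *)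

theory Defs
  imports Main
begin

definition is_filter :: "nat set set \<Rightarrow> bool" where
  "is_filter F \<longleftrightarrow>
     (\<forall>A\<in>F. \<forall>B\<in>F. A \<inter> B \<in> F) \<and>
     (\<forall>A\<in>F. \<forall>B. A \<subseteq> B \<longrightarrow> B \<in> F) \<and>
     (\<forall>A. finite (UNIV - A) \<longrightarrow> A \<in> F)"

definition proper_filter :: "nat set set \<Rightarrow> bool" where
  "proper_filter F \<longleftrightarrow> is_filter F \<and> (\<forall>A\<in>F. infinite A)"

text \<open>Finite sequences are lists; the k-th initial segment of an infinite sequence f
  is map f [0..<k].\<close>
definition is_tree :: "nat list set \<Rightarrow> bool" where
  "is_tree T \<longleftrightarrow> [] \<in> T \<and> (\<forall>s\<in>T. \<forall>k. take k s \<in> T)"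

definition is_X_tree :: "nat set set \<Rightarrow> nat list set \<Rightarrow> bool" where
  "is_X_tree X T \<longleftrightarrow> is_tree T \<and>
     (\<forall>s\<in>T. \<exists>Y\<in>X. \<forall>n\<in>Y. s @ [n] \<in> T)"

definition is_branch :: "nat list set \<Rightarrow> (nat \<Rightarrow> nat) \<Rightarrow> bool" where
  "is_branch T f \<longleftrightarrow> (\<forall>k. map f [0..<k] \<in> T)"

definition ramsey :: "nat set set \<Rightarrow> bool" where
  "ramsey F \<longleftrightarrow> (\<forall>T. is_X_tree F T \<longrightarrow> (\<exists>f. is_branch T f \<and> range f \<in> F))"

text \<open>A strategy for player I maps the finite sequence of
  II's previous moves to I's next move (I's own previous moves are determined by it).\<close>
definition I_winning_strategy :: "nat set set \<Rightarrow> nat set set \<Rightarrow> (nat list \<Rightarrow> nat set) \<Rightarrow> bool" where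
  "I_winning_strategy X Z \<sigma> \<longleftrightarrow>
     (\<forall>s. \<sigma> s \<in> X) \<and>
     (\<forall>f. (\<forall>k. f k \<in> \<sigma> (map f [0..<k])) \<longrightarrow> range f \<notin> Z)"

definition I_has_winning_strategy :: "nat set set \<Rightarrow> nat set set \<Rightarrow> bool" where
  "I_has_winning_strategy X Z \<longleftrightarrow> (\<exists>\<sigma>. I_winning_strategy X Z \<sigma>)"

text \<open>A strategy for player II maps the (nonempty) sequence of I's moves so far
  X_0, ..., X_k to II's response n_k \<in> X_k.\<close>
definition II_winning_strategy :: "nat set set \<Rightarrow> nat set set \<Rightarrow> (nat set list \<Rightarrow> nat) \<Rightarrow> bool" where
  "II_winning_strategy X Z \<tau> \<longleftrightarrow>
     (\<forall>Ys Y. set Ys \<subseteq> X \<and> Y \<in> X \<longrightarrow> \<tau> (Ys @ [Y]) \<in> Y) \<and>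
     (\<forall>g. (\<forall>k. g k \<in> X) \<longrightarrow> range (\<lambda>k. \<tau> (map g [0..<Suc k])) \<in> Z)"

definition II_has_winning_strategy :: "nat set set \<Rightarrow> nat set set \<Rightarrow> bool" where
  "II_has_winning_strategy X Z \<longleftrightarrow> (\<exists>\<tau>. II_winning_strategy X Z \<tau>)"

end

theory Submission
  imports Defs
begin

lemma UNIV_in: "is_filter F \<Longrightarrow> UNIV \<in> F"
  unfolding is_filter_def by auto

lemma cofin_in: "is_filter F \<Longrightarrow> finite A \<Longrightarrow> - A \<in> F"
  unfolding is_filter_def by (metis Compl_eq_Diff_UNIV double_compl)

lemma part1a:
  assumes "is_filter F" "\<not> ramsey F"
  shows "I_has_winning_strategy F F"
proof -
  obtain T where T: "is_X_tree F T" and nb: "\<And>f. is_branch T f \<Longrightarrow> range f \<notin> F"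
    using assms(2) unfolding ramsey_def by blast
  define \<sigma> where "\<sigma> s = (if s \<in> T then (SOME Y. Y \<in> F \<and> (\<forall>n\<in>Y. s@[n] \<in> T)) else UNIV)" for s
  have sp: "\<sigma> s \<in> F \<and> (s \<in> T \<longrightarrow> (\<forall>n\<in>\<sigma> s. s@[n] \<in> T))" for s
  proof (cases "s \<in> T")
    case True
    then have "\<exists>Y. Y \<in> F \<and> (\<forall>n\<in>Y. s@[n] \<in> T)" using T unfolding is_X_tree_def by blast
    then have "(SOME Y. Y \<in> F \<and> (\<forall>n\<in>Y. s@[n] \<in> T)) \<in> F \<and> (\<forall>n\<in>(SOME Y. Y \<in> F \<and> (\<forall>n\<in>Y. s@[n] \<in> T)). s@[n] \<in> T)"
      by (rule someI_ex)
    then show ?thesis using True unfolding \<sigma>_def by simp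
  next
    case False then show ?thesis using UNIV_in[OF assms(1)] unfolding \<sigma>_def by simp
  qed
  have "I_winning_strategy F F \<sigma>"
    unfolding I_winning_strategy_def
  proof (intro conjI allI impI)
    fix s show "\<sigma> s \<in> F" using sp by blast
  next
    fix f assume f: "\<forall>k. f k \<in> \<sigma> (map f [0..<k])"
    have "map f [0..<k] \<in> T" for k
    proof (induction k)
      case 0 then show ?case using T unfolding is_X_tree_def is_tree_def by simp
    next
      case (Suc k) then show ?case using sp f by simp
    qed
    then show "range f \<notin> F" using nb unfolding is_branch_def by blast
  qed
  then show ?thesis unfolding I_has_winning_strategy_def by blast
qed

lemma part1b:
  assumes "I_has_winning_strategy F F"
  shows "\<not> ramsey F"
proof
  assume r: "ramsey F"
  obtain \<sigma> where s: "I_winning_strategy F F \<sigma>" using assms unfolding I_has_winning_strategy_def by blast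
  define T where "T = {s. \<forall>k<length s. s!k \<in> \<sigma> (take k s)}"
  have "is_X_tree F T"
    unfolding is_X_tree_def is_tree_def
  proof (intro conjI ballI allI)
    show "[] \<in> T" unfolding T_def by simp
  next
    fix s k assume "s \<in> T" then show "take k s \<in> T" unfolding T_def by auto
  next
    fix s assume st: "s \<in> T"
    have "\<forall>n\<in>\<sigma> s. s@[n] \<in> T"
    proof
      fix n assume n: "n \<in> \<sigma> s"
      show "s@[n] \<in> T" unfolding T_def
      proof (intro CollectI allI impI)
        fix k assume "k < length (s@[n])"
        then consider "k < length s" | "k = length s" by (auto simp: less_Suc_eq)
        then show "(s@[n])!k \<in> \<sigma> (take k (s@[n]))"
        proof cases
          case 1 then show ?thesis using st unfolding T_def by (simp add: nth_append)
        next
          case 2 then show ?thesis using n by simp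
        qed
      qed
    qed
    then show "\<exists>Y\<in>F. \<forall>n\<in>Y. s @ [n] \<in> T" using s unfolding I_winning_strategy_def by blast
  qed
  then obtain f where f: "is_branch T f" "range f \<in> F" using r unfolding ramsey_def by blast
  have "f k \<in> \<sigma> (map f [0..<k])" for k
  proof -
    have "map f [0..<Suc k] \<in> T" using f(1) unfolding is_branch_def by blast
    then have "(map f [0..<Suc k]) ! k \<in> \<sigma> (take k (map f [0..<Suc k]))"
      unfolding T_def by (simp del: upt_Suc)
    then show ?thesis by (simp del: upt_Suc add: take_map take_upt)
  qed
  then show False using s f(2) unfolding I_winning_strategy_def by blast
qed

definition Rset :: "(nat set list \<Rightarrow> nat) \<Rightarrow> nat set list \<Rightarrow> nat set" where
  "Rset \<tau> L = (\<lambda>j. \<tau> (take (Suc j) L)) ` {..<length L}"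

definition stp :: "(nat set list \<Rightarrow> nat) \<Rightarrow> nat set list \<times> nat set list \<Rightarrow> nat set list \<times> nat set list" where
  "stp \<tau> p = (let L1' = fst p @ [- (Rset \<tau> (fst p) \<union> Rset \<tau> (snd p))]
     in (L1', snd p @ [- (Rset \<tau> L1' \<union> Rset \<tau> (snd p))]))"

definition SS where "SS \<tau> n = (stp \<tau> ^^ n) ([],[])"

lemma fstS: "fst (SS \<tau> (Suc n)) = fst (SS \<tau> n) @ [- (Rset \<tau> (fst (SS \<tau> n)) \<union> Rset \<tau> (snd (SS \<tau> n)))]"
  unfolding SS_def by (simp add: stp_def Let_def)

lemma sndS: "snd (SS \<tau> (Suc n)) = snd (SS \<tau> n) @ [- (Rset \<tau> (fst (SS \<tau> (Suc n))) \<union> Rset \<tau> (snd (SS \<tau> n)))]"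
  unfolding SS_def by (simp add: stp_def Let_def)

lemma Rset_map: "Rset \<tau> (map g [0..<k]) = (\<lambda>j. \<tau> (map g [0..<Suc j])) ` {..<k}"
  unfolding Rset_def by (auto simp: take_map min_def)

lemma finite_Rset: "finite (Rset \<tau> L)" unfolding Rset_def by simp

lemma part2:
  assumes "proper_filter F"
  shows "\<not> II_has_winning_strategy F F"
proof
  assume "II_has_winning_strategy F F"
  then obtain \<tau> where t: "II_winning_strategy F F \<tau>" unfolding II_has_winning_strategy_def by blast
  have flt: "is_filter F" and inf: "\<And>A. A \<in> F \<Longrightarrow> infinite A" using assms unfolding proper_filter_def by auto
  define g1 where "g1 n = last (fst (SS \<tau> (Suc n)))" for n
  define g2 where "g2 n = last (snd (SS \<tau> (Suc n)))" for n
  have m: "map g1 [0..<n] = fst (SS \<tau> n) \<and> map g2 [0..<n] = snd (SS \<tau> n)" for n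
  proof (induction n)
    case 0 then show ?case by (simp add: SS_def)
  next
    case (Suc n)
    have e1: "g1 n = last (fst (SS \<tau> (Suc n)))" "g2 n = last (snd (SS \<tau> (Suc n)))"
      unfolding g1_def g2_def by simp_all
    have "map g1 [0..<Suc n] = fst (SS \<tau> n) @ [g1 n]" using Suc.IH by simp
    moreover have "map g2 [0..<Suc n] = snd (SS \<tau> n) @ [g2 n]" using Suc.IH by simp
    ultimately show ?case using e1 by (metis fstS sndS last_snoc)
  qed
  have g1e: "g1 k = - (Rset \<tau> (map g1 [0..<k]) \<union> Rset \<tau> (map g2 [0..<k]))" for k
  proof -
    have "g1 k = -(Rset \<tau> (fst (SS \<tau> k)) \<union> Rset \<tau> (snd (SS \<tau> k)))"
      unfolding g1_def by (simp only: fstS last_snoc)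
    then show ?thesis using m[of k] by simp
  qed
  have g2e: "g2 k = - (Rset \<tau> (map g1 [0..<Suc k]) \<union> Rset \<tau> (map g2 [0..<k]))" for k
  proof -
    have "g2 k = -(Rset \<tau> (fst (SS \<tau> (Suc k))) \<union> Rset \<tau> (snd (SS \<tau> k)))"
      unfolding g2_def by (simp only: sndS last_snoc)
    then show ?thesis using m[of k] m[of "Suc k"] by simp
  qed
  have g1F: "g1 k \<in> F" for k using g1e cofin_in[OF flt] finite_Rset by (metis finite_UnI)
  have g2F: "g2 k \<in> F" for k using g2e cofin_in[OF flt] finite_Rset by (metis finite_UnI)
  define a where "a k = \<tau> (map g1 [0..<Suc k])" for k
  define b where "b k = \<tau> (map g2 [0..<Suc k])" for k
  have aI: "a k \<in> g1 k" for k
    proof -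
    have "set (map g1 [0..<k]) \<subseteq> F" using g1F by auto
    then have "\<tau> (map g1 [0..<k] @ [g1 k]) \<in> g1 k" using t g1F unfolding II_winning_strategy_def by blast
    then show ?thesis unfolding a_def by simp
  qed
  have bI: "b k \<in> g2 k" for k
    proof -
    have "set (map g2 [0..<k]) \<subseteq> F" using g2F by auto
    then have "\<tau> (map g2 [0..<k] @ [g2 k]) \<in> g2 k" using t g2F unfolding II_winning_strategy_def by blast
    then show ?thesis unfolding b_def by simp
  qed
  have ra: "range a \<in> F" using t g1F unfolding II_winning_strategy_def a_def by blast
  have rb: "range b \<in> F" using t g2F unfolding II_winning_strategy_def b_def by blast
  have disj: "a k \<noteq> b j" for k j
  proof (cases "k \<le> j")
    case True
    have "b j \<notin> Rset \<tau> (map g1 [0..<Suc j])" using bI[of j] g2e[of j] by auto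
    moreover have "a k \<in> Rset \<tau> (map g1 [0..<Suc j])" unfolding Rset_map a_def using True by auto
    ultimately show ?thesis by metis
  next
    case False
    have "a k \<notin> Rset \<tau> (map g2 [0..<k])" using aI[of k] g1e[of k] by auto
    moreover have "b j \<in> Rset \<tau> (map g2 [0..<k])" unfolding Rset_map b_def using False by auto
    ultimately show ?thesis by metis
  qed
  have "range a \<inter> range b \<in> F" using ra rb flt unfolding is_filter_def by blast
  moreover have "range a \<inter> range b = {}" using disj by auto
  ultimately show False using inf by fastforce
qed

theorem theorem2p6:
  fixes F :: "nat set set"
  assumes "proper_filter F"
  shows "(I_has_winning_strategy F F \<longleftrightarrow> \<not> ramsey F) \<and> \<not> II_has_winning_strategy F F"
  using part1a part1b part2 assms unfolding proper_filter_def by blast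

end
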